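(* Let $X=\{X(t),t\in[a,b]\}$ be a centered separable Gaussian process with $m:=\sup_{t\in[a,b]}\left(\mathbb E|X(t)|^2\right)^{1/2}<\infty$. Assume there is a strictly increasing function $\sigma:(0,\infty)\to(0,\infty)$ with $\sigma(h)\downarrow0$ as $h\downarrow0$ and $\sup_{|t-s|<h}\left(\mathbb E|X(t)-X(s)|^2\right)^{1/2}\le\sigma(h)$ for all $h>0$. Let $r:[1,\infty)\to[0,\infty)$ be nondecreasing with $y\mapsto r(e^y)$, $y\ge0$, convex. Then for any $\theta\in(0,1)$ and any $\lambda>0$, \[ \mathbb E\exp\Big\{\lambda\sup_{t\in[a,b]}|X(t)|\Big\}\le2\exp\Big\{\frac{\lambda^2m^2}{2(1-\theta)^2}\Big\}r^{(-1)}\Big(\frac{\widetilde I_r(\theta m)}{\theta m}\Big),\qquad \widetilde I_r(x)=\int_0^x r\Big(\frac{b-a}{2\sigma^{(-1)}(v)}+1\Big)dv. \]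
   Context: $\sigma^{(-1)}$ is the inverse of $\sigma$; $r^{(-1)}(t)=\sup\{u\ge0:r(u)\le t\}$ is the generalized inverse of $r$. *)

theory Defs
  imports "HOL-Probability.Probability"
begin

definition centered_normal_rv :: "'a measure \<Rightarrow> ('a \<Rightarrow> real) \<Rightarrow> bool" where
  "centered_normal_rv M Y \<longleftrightarrow> Y \<in> borel_measurable M \<and>
     ((AE \<omega> in M. Y \<omega> = 0) \<or> (\<exists>s>0. distributed M lborel Y (normal_density 0 s)))"

definition centered_gaussian_process :: "'a measure \<Rightarrow> real set \<Rightarrow> (real \<Rightarrow> 'a \<Rightarrow> real) \<Rightarrow> bool" where
  "centered_gaussian_process M I X \<longleftrightarrow>
     (\<forall>F c. finite F \<and> F \<subseteq> I \<longrightarrow> centered_normal_rv M (\<lambda>\<omega>. \<Sum>t\<in>F. c t * X t \<omega>))"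

definition separable_process :: "'a measure \<Rightarrow> real set \<Rightarrow> (real \<Rightarrow> 'a \<Rightarrow> real) \<Rightarrow> bool" where
  "separable_process M I X \<longleftrightarrow>
     (\<exists>S N. countable S \<and> S \<subseteq> I \<and> N \<in> sets M \<and> emeasure M N = 0 \<and>
        (\<forall>\<omega>\<in>space M - N. \<forall>t\<in>I. (t, X t \<omega>) \<in> closure ((\<lambda>s. (s, X s \<omega>)) ` S)))"

text \<open>Generalized inverse of sigma (equals the inverse on the range of sigma; +\<infinity> above it).\<close>
definition sigma_ginv :: "(real \<Rightarrow> real) \<Rightarrow> real \<Rightarrow> ereal" where
  "sigma_ginv \<sigma> v = (SUP h \<in> {h. 0 < h \<and> \<sigma> h \<le> v}. ereal h)"

definition r_ginv :: "(real \<Rightarrow> real) \<Rightarrow> ennreal \<Rightarrow> ennreal" where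
  "r_ginv r t = (SUP u \<in> {u. 1 \<le> u \<and> ennreal (r u) \<le> t}. ennreal u)"

definition I_tilde :: "(real \<Rightarrow> real) \<Rightarrow> (real \<Rightarrow> real) \<Rightarrow> real \<Rightarrow> real \<Rightarrow> real \<Rightarrow> ennreal" where
  "I_tilde r \<sigma> a b x = (\<integral>\<^sup>+ v\<in>{0..x}.
      ennreal (r ((if sigma_ginv \<sigma> v = \<infinity> then 0
                   else (b - a) / (2 * real_of_ereal (sigma_ginv \<sigma> v))) + 1)) \<partial>lborel)"

end

theory Submission
  imports Defs
begin

lemma normal_density_exp_shift:
  assumes "s > 0"
  shows "normal_density 0 s x * exp (c * x) = exp (c\<^sup>2 * s\<^sup>2 / 2) * normal_density (c * s\<^sup>2) s x"
proof -
  have "- x\<^sup>2 / (2 * s\<^sup>2) + c * x = c\<^sup>2 * s\<^sup>2 / 2 + (- (x - c * s\<^sup>2)\<^sup>2 / (2 * s\<^sup>2))"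
    using assms by (simp add: field_simps power2_eq_square)
  then have "exp (- x\<^sup>2 / (2 * s\<^sup>2)) * exp (c * x) = exp (c\<^sup>2 * s\<^sup>2 / 2) * exp (- (x - c * s\<^sup>2)\<^sup>2 / (2 * s\<^sup>2))"
    by (metis exp_add)
  then show ?thesis unfolding normal_density_def
    by (simp add: algebra_simps)
qed

lemma nn_integral_normal_density: assumes "s > 0" shows "(\<integral>\<^sup>+x. ennreal (normal_density \<mu> s x) \<partial>lborel) = 1"
proof -
  interpret p: prob_space "density lborel (normal_density \<mu> s)"
    by (rule prob_space_normal_density) (rule assms)
  have "emeasure (density lborel (normal_density \<mu> s)) UNIV = 1"
    using p.emeasure_space_1 by simp
  then show ?thesis by (simp add: emeasure_density)
qed

lemma normal_mgf:
  assumes "s > 0"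
  shows "(\<integral>\<^sup>+x. ennreal (normal_density 0 s x) * ennreal (exp (c * x)) \<partial>lborel) = ennreal (exp (c\<^sup>2 * s\<^sup>2 / 2))"
proof -
  have "(\<integral>\<^sup>+x. ennreal (normal_density 0 s x) * ennreal (exp (c * x)) \<partial>lborel)
      = (\<integral>\<^sup>+x. ennreal (exp (c\<^sup>2 * s\<^sup>2 / 2)) * ennreal (normal_density (c * s\<^sup>2) s x) \<partial>lborel)"
    by (intro nn_integral_cong) (simp add: ennreal_mult'[symmetric] normal_density_exp_shift[OF assms])
  also have "\<dots> = ennreal (exp (c\<^sup>2 * s\<^sup>2 / 2))"
    by (subst nn_integral_cmult) (simp_all add: nn_integral_normal_density[OF assms])
  finally show ?thesis .
qed

lemma gauss_abs_mgf:
  assumes P: "prob_space M" and Y: "centered_normal_rv M Y"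
  shows "(\<integral>\<^sup>+\<omega>. ennreal (exp (c * \<bar>Y \<omega>\<bar>)) \<partial>M) \<le> 2 * ennreal (exp (c\<^sup>2 * (\<integral>\<omega>. (Y \<omega>)\<^sup>2 \<partial>M) / 2))"
proof -
  interpret prob_space M by (rule P)
  have Ym[measurable]: "Y \<in> borel_measurable M" using Y by (simp add: centered_normal_rv_def)
  have I0: "(\<integral>\<omega>. (Y \<omega>)\<^sup>2 \<partial>M) \<ge> 0" by simp
  show ?thesis
  proof (cases "AE \<omega> in M. Y \<omega> = 0")
    case True
    have "(\<integral>\<^sup>+\<omega>. ennreal (exp (c * \<bar>Y \<omega>\<bar>)) \<partial>M) = (\<integral>\<^sup>+\<omega>. 1 \<partial>M)"
      using True by (intro nn_integral_cong_AE) auto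
    also have "\<dots> = 1" by (simp add: emeasure_space_1)
    also have "\<dots> \<le> 2 * ennreal (exp (c\<^sup>2 * (\<integral>\<omega>. (Y \<omega>)\<^sup>2 \<partial>M) / 2))"
    proof -
      have "1 \<le> exp (c\<^sup>2 * (\<integral>\<omega>. (Y \<omega>)\<^sup>2 \<partial>M) / 2)" using I0 by simp
      then have "1 \<le> 2 * exp (c\<^sup>2 * (\<integral>\<omega>. (Y \<omega>)\<^sup>2 \<partial>M) / 2)" by linarith
      then have "ennreal 1 \<le> ennreal (2 * exp (c\<^sup>2 * (\<integral>\<omega>. (Y \<omega>)\<^sup>2 \<partial>M) / 2))"
        by (rule ennreal_leI)
      then show ?thesis by (simp add: ennreal_mult)
    qed
    finally show ?thesis .
  next
    case False
    then obtain s where s: "s > 0" and D: "distributed M lborel Y (normal_density 0 s)"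
      using Y by (auto simp: centered_normal_rv_def)
    have var: "(\<integral>\<omega>. (Y \<omega>)\<^sup>2 \<partial>M) = s\<^sup>2"
      using normal_distributed_variance[OF s D] normal_distributed_expectation[OF s D] by simp
    have "(\<integral>\<^sup>+\<omega>. ennreal (exp (c * \<bar>Y \<omega>\<bar>)) \<partial>M)
        \<le> (\<integral>\<^sup>+\<omega>. ennreal (exp (c * Y \<omega>)) + ennreal (exp ((-c) * Y \<omega>)) \<partial>M)"
      by (intro nn_integral_mono) (auto simp: abs_if ennreal_plus[symmetric] simp del: ennreal_plus)
    also have "\<dots> = (\<integral>\<^sup>+\<omega>. ennreal (exp (c * Y \<omega>)) \<partial>M) + (\<integral>\<^sup>+\<omega>. ennreal (exp ((-c) * Y \<omega>)) \<partial>M)"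
      by (rule nn_integral_add) auto
    also have "(\<integral>\<^sup>+\<omega>. ennreal (exp (c * Y \<omega>)) \<partial>M) = ennreal (exp (c\<^sup>2 * s\<^sup>2 / 2))"
      using distributed_nn_integral[OF D, of "\<lambda>x. ennreal (exp (c * x))"] normal_mgf[OF s, of c]
      by simp
    also have "(\<integral>\<^sup>+\<omega>. ennreal (exp ((-c) * Y \<omega>)) \<partial>M) = ennreal (exp (c\<^sup>2 * s\<^sup>2 / 2))"
      using distributed_nn_integral[OF D, of "\<lambda>x. ennreal (exp ((-c) * x))"] normal_mgf[OF s, of "-c"]
      by simp
    finally show ?thesis using var by (simp add: mult_2)
  qed
qed

lemma gp_single:
  assumes "centered_gaussian_process M I X" "t \<in> I"
  shows "centered_normal_rv M (X t)"
proof -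
  have "centered_normal_rv M (\<lambda>\<omega>. \<Sum>u\<in>{t}. (\<lambda>_. 1) u * X u \<omega>)"
  proof -
    have H: "\<forall>F c. finite F \<and> F \<subseteq> I \<longrightarrow> centered_normal_rv M (\<lambda>\<omega>. \<Sum>t\<in>F. c t * X t \<omega>)"
      using assms(1) unfolding centered_gaussian_process_def by simp
    show ?thesis using H[rule_format, of "{t}" "\<lambda>_. 1"] assms(2) by simp
  qed
  then show ?thesis by simp
qed

lemma gp_diff:
  assumes "centered_gaussian_process M I X" "t \<in> I" "s \<in> I"
  shows "centered_normal_rv M (\<lambda>\<omega>. X t \<omega> - X s \<omega>)"
proof (cases "t = s")
  case True
  have "X t \<in> borel_measurable M" using gp_single[OF assms(1,2)] by (simp add: centered_normal_rv_def)
  then show ?thesis using True by (simp add: centered_normal_rv_def)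
next
  case False
  have "centered_normal_rv M (\<lambda>\<omega>. \<Sum>u\<in>{t,s}. (\<lambda>u. if u = t then 1 else -1) u * X u \<omega>)"
  proof -
    have H: "\<forall>F c. finite F \<and> F \<subseteq> I \<longrightarrow> centered_normal_rv M (\<lambda>\<omega>. \<Sum>t\<in>F. c t * X t \<omega>)"
      using assms(1) unfolding centered_gaussian_process_def by simp
    show ?thesis using H[rule_format, of "{t,s}" "\<lambda>u. if u = t then 1 else -1"] assms(2,3) by simp
  qed
  then show ?thesis using False by simp
qed

lemma max_gauss_bound:
  assumes P: "prob_space M" and fin: "finite I" and ne: "I \<noteq> {}"
    and Z: "\<And>i. i \<in> I \<Longrightarrow> centered_normal_rv M (Z i)"
    and V: "\<And>i. i \<in> I \<Longrightarrow> (\<integral>\<omega>. (Z i \<omega>)\<^sup>2 \<partial>M) \<le> v"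
  shows "(\<integral>\<^sup>+\<omega>. ennreal (exp (c * (MAX i\<in>I. \<bar>Z i \<omega>\<bar>))) \<partial>M) \<le> ennreal (2 * real (card I) * exp (c\<^sup>2 * v / 2))"
proof -
  have meas[measurable]: "\<And>i. i \<in> I \<Longrightarrow> Z i \<in> borel_measurable M"
    using Z by (simp add: centered_normal_rv_def)
  have pw: "ennreal (exp (c * (MAX i\<in>I. \<bar>Z i \<omega>\<bar>))) \<le> (\<Sum>i\<in>I. ennreal (exp (c * \<bar>Z i \<omega>\<bar>)))" for \<omega>
  proof -
    have "(MAX i\<in>I. \<bar>Z i \<omega>\<bar>) \<in> (\<lambda>i. \<bar>Z i \<omega>\<bar>) ` I"
      using fin ne by (intro Max_in) auto
    then obtain i0 where i0: "i0 \<in> I" "(MAX i\<in>I. \<bar>Z i \<omega>\<bar>) = \<bar>Z i0 \<omega>\<bar>"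
      by auto
    have "ennreal (exp (c * \<bar>Z i0 \<omega>\<bar>)) \<le> (\<Sum>i\<in>I. ennreal (exp (c * \<bar>Z i \<omega>\<bar>)))"
      using fin i0(1) by (intro member_le_sum[where f="\<lambda>i. ennreal (exp (c * \<bar>Z i \<omega>\<bar>))"]) auto
    then show ?thesis using i0 by simp
  qed
  have "(\<integral>\<^sup>+\<omega>. ennreal (exp (c * (MAX i\<in>I. \<bar>Z i \<omega>\<bar>))) \<partial>M)
      \<le> (\<integral>\<^sup>+\<omega>. (\<Sum>i\<in>I. ennreal (exp (c * \<bar>Z i \<omega>\<bar>))) \<partial>M)"
    by (intro nn_integral_mono pw)
  also have "\<dots> = (\<Sum>i\<in>I. (\<integral>\<^sup>+\<omega>. ennreal (exp (c * \<bar>Z i \<omega>\<bar>)) \<partial>M))"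
    by (rule nn_integral_sum) auto
  also have "\<dots> \<le> (\<Sum>i\<in>I. ennreal (2 * exp (c\<^sup>2 * v / 2)))"
  proof (rule sum_mono)
    fix i assume i: "i \<in> I"
    have "(\<integral>\<^sup>+\<omega>. ennreal (exp (c * \<bar>Z i \<omega>\<bar>)) \<partial>M) \<le> 2 * ennreal (exp (c\<^sup>2 * (\<integral>\<omega>. (Z i \<omega>)\<^sup>2 \<partial>M) / 2))"
      by (rule gauss_abs_mgf[OF P Z[OF i]])
    also have "\<dots> \<le> 2 * ennreal (exp (c\<^sup>2 * v / 2))"
    proof -
      have "c\<^sup>2 * (\<integral>\<omega>. (Z i \<omega>)\<^sup>2 \<partial>M) / 2 \<le> c\<^sup>2 * v / 2"
        using V[OF i] by (simp add: mult_left_mono divide_right_mono)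
      then show ?thesis by (intro mult_left_mono ennreal_leI) auto
    qed
    also have "\<dots> = ennreal (2 * exp (c\<^sup>2 * v / 2))" by (simp add: ennreal_mult)
    finally show "(\<integral>\<^sup>+\<omega>. ennreal (exp (c * \<bar>Z i \<omega>\<bar>)) \<partial>M) \<le> ennreal (2 * exp (c\<^sup>2 * v / 2))" .
  qed
  also have "\<dots> = ennreal (\<Sum>i\<in>I. 2 * exp (c\<^sup>2 * v / 2))"
    by (rule sum_ennreal) simp
  also have "(\<Sum>i\<in>I. 2 * exp (c\<^sup>2 * v / 2)) = 2 * real (card I) * exp (c\<^sup>2 * v / 2)"
    by simp
  finally show ?thesis .
qed

lemma holder_exp:
  assumes fin: "finite J" and p: "\<And>j. j \<in> J \<Longrightarrow> p j > 0" and ps: "(\<Sum>j\<in>J. p j) = 1"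
    and W[measurable]: "\<And>j. j \<in> J \<Longrightarrow> W j \<in> borel_measurable M"
    and B: "\<And>j. j \<in> J \<Longrightarrow> B j > 0"
    and bnd: "\<And>j. j \<in> J \<Longrightarrow> (\<integral>\<^sup>+\<omega>. ennreal (exp (W j \<omega> / p j)) \<partial>M) \<le> ennreal (B j)"
  shows "(\<integral>\<^sup>+\<omega>. ennreal (exp (\<Sum>j\<in>J. W j \<omega>)) \<partial>M) \<le> ennreal (exp (\<Sum>j\<in>J. p j * ln (B j)))"
proof -
  define L where "L = (\<Sum>j\<in>J. p j * ln (B j))"
  have ne: "J \<noteq> {}" using ps by auto
  have pw: "exp (\<Sum>j\<in>J. W j \<omega>) \<le> (\<Sum>j\<in>J. exp L * (p j / B j) * exp (W j \<omega> / p j))" for \<omega>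
  proof -
    define u where "u j = W j \<omega> / p j - ln (B j)" for j
    have "(\<Sum>j\<in>J. p j * u j) + L = (\<Sum>j\<in>J. p j * u j + p j * ln (B j))"
      unfolding L_def by (simp add: sum.distrib)
    also have "\<dots> = (\<Sum>j\<in>J. W j \<omega>)"
    proof (intro sum.cong refl)
      fix j assume "j \<in> J"
      then have "p j > 0" by (rule p)
      then show "p j * u j + p j * ln (B j) = W j \<omega>" unfolding u_def by (simp add: field_simps)
    qed
    finally have "(\<Sum>j\<in>J. W j \<omega>) = (\<Sum>j\<in>J. p j * u j) + L" by simp
    then have "exp (\<Sum>j\<in>J. W j \<omega>) = exp L * exp (\<Sum>j\<in>J. p j *\<^sub>R u j)" by (simp add: exp_add)
    also have "exp (\<Sum>j\<in>J. p j *\<^sub>R u j) \<le> (\<Sum>j\<in>J. p j * exp (u j))"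
      using convex_on_sum[OF fin ne convex_on_exp[of 1], of p u] ps p by (auto simp: less_imp_le)
    also have "(\<Sum>j\<in>J. p j * exp (u j)) = (\<Sum>j\<in>J. (p j / B j) * exp (W j \<omega> / p j))"
      unfolding u_def using B by (intro sum.cong refl) (simp add: exp_diff)
    finally show ?thesis by (simp add: sum_distrib_left mult.assoc mult_left_mono)
  qed
  have "(\<integral>\<^sup>+\<omega>. ennreal (exp (\<Sum>j\<in>J. W j \<omega>)) \<partial>M)
      \<le> (\<integral>\<^sup>+\<omega>. (\<Sum>j\<in>J. ennreal (exp L * (p j / B j)) * ennreal (exp (W j \<omega> / p j))) \<partial>M)"
  proof (intro nn_integral_mono)
    fix \<omega>
    have "ennreal (exp (\<Sum>j\<in>J. W j \<omega>)) \<le> ennreal (\<Sum>j\<in>J. exp L * (p j / B j) * exp (W j \<omega> / p j))"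
      by (rule ennreal_leI[OF pw])
    also have "\<dots> = (\<Sum>j\<in>J. ennreal (exp L * (p j / B j)) * ennreal (exp (W j \<omega> / p j)))"
    proof -
      have "(\<Sum>j\<in>J. ennreal (exp L * (p j / B j)) * ennreal (exp (W j \<omega> / p j)))
          = (\<Sum>j\<in>J. ennreal (exp L * (p j / B j) * exp (W j \<omega> / p j)))"
      proof (intro sum.cong refl)
        fix j assume j: "j \<in> J"
        show "ennreal (exp L * (p j / B j)) * ennreal (exp (W j \<omega> / p j)) = ennreal (exp L * (p j / B j) * exp (W j \<omega> / p j))"
          using p[OF j] B[OF j] by (intro ennreal_mult[symmetric]) simp_all
      qed
      also have "\<dots> = ennreal (\<Sum>j\<in>J. exp L * (p j / B j) * exp (W j \<omega> / p j))"
        using p B by (intro sum_ennreal) (simp add: less_imp_le)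
      finally show ?thesis by simp
    qed
    finally show "ennreal (exp (\<Sum>j\<in>J. W j \<omega>)) \<le> (\<Sum>j\<in>J. ennreal (exp L * (p j / B j)) * ennreal (exp (W j \<omega> / p j)))" .
  qed
  also have "\<dots> = (\<Sum>j\<in>J. ennreal (exp L * (p j / B j)) * (\<integral>\<^sup>+\<omega>. ennreal (exp (W j \<omega> / p j)) \<partial>M))"
    by (subst nn_integral_sum) (auto intro!: sum.cong nn_integral_cmult)
  also have "\<dots> \<le> (\<Sum>j\<in>J. ennreal (exp L * (p j / B j)) * ennreal (B j))"
    by (intro sum_mono mult_left_mono bnd) auto
  also have "\<dots> = (\<Sum>j\<in>J. ennreal (exp L * p j))"
  proof (intro sum.cong refl)
    fix j assume j: "j \<in> J"
    have "ennreal (exp L * (p j / B j)) * ennreal (B j) = ennreal (exp L * (p j / B j) * B j)"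
      using p[OF j] B[OF j] by (intro ennreal_mult[symmetric]) simp_all
    also have "exp L * (p j / B j) * B j = exp L * p j" using B[OF j] by simp
    finally show "ennreal (exp L * (p j / B j)) * ennreal (B j) = ennreal (exp L * p j)" .
  qed
  also have "\<dots> = ennreal (exp L * (\<Sum>j\<in>J. p j))"
    using p by (subst sum_ennreal) (auto simp: sum_distrib_left less_imp_le)
  finally show ?thesis using ps unfolding L_def by simp
qed

lemma sigma_small:
  fixes \<sigma> :: "real \<Rightarrow> real" and v :: real
  assumes tend: "(\<sigma> \<longlongrightarrow> 0) (at_right 0)" and v: "v > 0"
  shows "\<exists>h>0. \<sigma> h \<le> v"
proof -
  have "eventually (\<lambda>h. \<sigma> h < v) (at_right (0::real))"
    using order_tendstoD(2)[OF tend v] .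
  then obtain c where c: "c > 0" "\<And>y. y > 0 \<Longrightarrow> y < c \<Longrightarrow> \<sigma> y < v"
    unfolding eventually_at_right_field by auto
  then show ?thesis by (intro exI[of _ "c/2"]) (auto intro: less_imp_le)
qed

lemma sg_pos:
  assumes tend: "(\<sigma> \<longlongrightarrow> 0) (at_right 0)" and v: "v > 0"
  shows "sigma_ginv \<sigma> v > 0"
proof -
  obtain h where h: "h > 0" "\<sigma> h \<le> v" using sigma_small[OF tend v] by blast
  have "ereal h \<le> sigma_ginv \<sigma> v" unfolding sigma_ginv_def using h by (intro SUP_upper) auto
  then show ?thesis using h by (meson ereal_less(2) order_less_le_trans zero_ereal_def)
qed

lemma sg_lt:
  assumes "ereal x < sigma_ginv \<sigma> v"
  shows "\<exists>h>0. \<sigma> h \<le> v \<and> x < h"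
  using assms unfolding sigma_ginv_def less_SUP_iff by auto

lemma sg_mono:
  assumes "v \<le> w"
  shows "sigma_ginv \<sigma> v \<le> sigma_ginv \<sigma> w"
  unfolding sigma_ginv_def using assms by (intro SUP_subset_mono) auto

definition gfun :: "(real \<Rightarrow> real) \<Rightarrow> real \<Rightarrow> real \<Rightarrow> real \<Rightarrow> real" where
  "gfun \<sigma> a b v = (if sigma_ginv \<sigma> v = \<infinity> then 0 else (b - a) / (2 * real_of_ereal (sigma_ginv \<sigma> v)))"

lemma I_tilde_gfun: "I_tilde r \<sigma> a b x = (\<integral>\<^sup>+ v\<in>{0..x}. ennreal (r (gfun \<sigma> a b v + 1)) \<partial>lborel)"
  unfolding I_tilde_def gfun_def by simp

lemma sg_cases: "sigma_ginv \<sigma> v = -\<infinity> \<or> sigma_ginv \<sigma> v \<ge> 0"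
proof (cases "{h. 0 < h \<and> \<sigma> h \<le> v} = {}")
  case True then show ?thesis unfolding sigma_ginv_def True by (simp add: bot_ereal_def)
next
  case False
  then obtain h where h: "h > 0" "\<sigma> h \<le> v" by auto
  have "ereal h \<le> sigma_ginv \<sigma> v" unfolding sigma_ginv_def using h by (intro SUP_upper) auto
  moreover have "(0::ereal) \<le> ereal h" using h by simp
  ultimately show ?thesis by (meson order_trans)
qed

lemma gfun_nonneg: "a \<le> b \<Longrightarrow> gfun \<sigma> a b v \<ge> 0"
  using sg_cases[of \<sigma> v] unfolding gfun_def
  by (auto intro!: divide_nonneg_nonneg real_of_ereal_pos)

lemma gfun_antimono:
  assumes tend: "(\<sigma> \<longlongrightarrow> 0) (at_right 0)" and ab: "a \<le> b" and v: "0 < v" and vw: "v \<le> w"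
  shows "gfun \<sigma> a b w \<le> gfun \<sigma> a b v"
proof -
  have sv: "sigma_ginv \<sigma> v > 0" by (rule sg_pos[OF tend v])
  have sw: "sigma_ginv \<sigma> w \<ge> sigma_ginv \<sigma> v" by (rule sg_mono[OF vw])
  show ?thesis
  proof (cases "sigma_ginv \<sigma> w = \<infinity>")
    case True then show ?thesis using gfun_nonneg[OF ab] by (simp add: gfun_def)
  next
    case False
    then have vfin: "sigma_ginv \<sigma> v \<noteq> \<infinity>" using sw by auto
    obtain x where x: "sigma_ginv \<sigma> v = ereal x" using sv vfin by (cases "sigma_ginv \<sigma> v") auto
    obtain y where y: "sigma_ginv \<sigma> w = ereal y" using sv sw False by (cases "sigma_ginv \<sigma> w") auto
    have "0 < x" "x \<le> y" using sv sw x y by auto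
    then have "(b - a) / (2 * y) \<le> (b - a) / (2 * x)"
      using ab by (intro divide_left_mono) auto
    then show ?thesis unfolding gfun_def using x y by simp
  qed
qed

lemma grid_exists:
  fixes a b h :: real
  assumes ab: "a < b" and h: "h > 0"
  shows "\<exists>A. finite A \<and> A \<noteq> {} \<and> A \<subseteq> {a..b} \<and> real (card A) \<le> (b - a) / (2 * h) + 1 \<and>
             (\<forall>t\<in>{a..b}. \<exists>s\<in>A. \<bar>t - s\<bar> < h)"
proof -
  define x where "x = (b - a) / (2 * h)"
  have x0: "x > 0" unfolding x_def using ab h by simp
  define n where "n = nat \<lfloor>x\<rfloor> + 1"
  have n1: "n \<ge> 1" unfolding n_def by simp
  have nx: "real n > x" unfolding n_def using x0 by linarith
  have nx2: "real n \<le> x + 1" unfolding n_def using x0 by linarith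
  define \<delta> where "\<delta> = (b - a) / real n"
  have d0: "\<delta> > 0" unfolding \<delta>_def using ab n1 by simp
  have dh: "\<delta> / 2 < h"
  proof -
    have "b - a < 2 * h * real n" using nx h unfolding x_def by (simp add: field_simps)
    then show ?thesis unfolding \<delta>_def using n1 h by (simp add: field_simps)
  qed
  have bn: "a + real n * \<delta> = b" unfolding \<delta>_def using n1 by simp
  define c where "c i = a + (real i + 1/2) * \<delta>" for i :: nat
  define A where "A = c ` {..<n}"
  have fin: "finite A" unfolding A_def by simp
  have ne: "A \<noteq> {}" unfolding A_def using n1 by (metis image_is_empty lessThan_iff less_le_trans zero_less_one emptyE)
  have sub: "A \<subseteq> {a..b}"
  proof
    fix s assume "s \<in> A"
    then obtain i where i: "i < n" "s = c i" unfolding A_def by auto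
    have "real i + 1/2 \<le> real n" using i(1) by linarith
    then have "(real i + 1/2) * \<delta> \<le> real n * \<delta>" using d0 by (intro mult_right_mono) auto
    then show "s \<in> {a..b}" using i d0 bn unfolding c_def by auto
  qed
  have card: "real (card A) \<le> x + 1"
  proof -
    have "card A \<le> card {..<n}" unfolding A_def by (rule card_image_le) simp
    then show ?thesis using nx2 by simp
  qed
  have cover: "\<exists>s\<in>A. \<bar>t - s\<bar> < h" if t: "t \<in> {a..b}" for t
  proof -
    define y where "y = (t - a) / \<delta>"
    have y0: "0 \<le> y" unfolding y_def using t d0 by auto
    have yn: "y \<le> real n"
    proof -
      have "t - a \<le> real n * \<delta>" using t bn by auto
      then show ?thesis unfolding y_def using d0 by (simp add: field_simps)
    qed
    define k where "k = nat \<lfloor>y\<rfloor>"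
    define i where "i = min (n - 1) k"
    have iy: "real i \<le> y \<and> y \<le> real i + 1"
    proof (cases "k \<le> n - 1")
      case True
      then have "i = k" unfolding i_def by simp
      moreover have "real k \<le> y" "y \<le> real k + 1" unfolding k_def using y0 by linarith+
      ultimately show ?thesis by simp
    next
      case False
      then have "k \<ge> n" by simp
      then have "real n \<le> y" unfolding k_def using y0 by linarith
      then have "y = real n" using yn by simp
      moreover have "i = n - 1" unfolding i_def using False by simp
      ultimately show ?thesis using n1 by (simp add: of_nat_diff)
    qed
    have i_n: "i < n" unfolding i_def using n1 by simp
    have "t = a + y * \<delta>" unfolding y_def using d0 by simp
    then have "t - c i = (y - (real i + 1/2)) * \<delta>" unfolding c_def by (simp add: algebra_simps)
    then have "\<bar>t - c i\<bar> = \<bar>y - (real i + 1/2)\<bar> * \<delta>" using d0 by (simp add: abs_mult)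
    also have "\<dots> \<le> (1/2) * \<delta>"
    proof (intro mult_right_mono)
      show "\<bar>y - (real i + 1/2)\<bar> \<le> 1/2" using iy by (auto simp: abs_if)
    qed (use d0 in auto)
    finally have "\<bar>t - c i\<bar> < h" using dh by simp
    then show ?thesis using i_n unfolding A_def by auto
  qed
  show ?thesis using fin ne sub card cover unfolding x_def by blast
qed

lemma grid_sg:
  assumes ab: "a < b" and tend: "(\<sigma> \<longlongrightarrow> 0) (at_right 0)" and v: "v > 0"
  shows "\<exists>A. finite A \<and> A \<noteq> {} \<and> A \<subseteq> {a..b} \<and> real (card A) \<le> gfun \<sigma> a b v + 1 \<and>
             (\<forall>t\<in>{a..b}. \<exists>s\<in>A. ereal \<bar>t - s\<bar> < sigma_ginv \<sigma> v)"
proof (cases "sigma_ginv \<sigma> v = \<infinity>")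
  case True
  have "gfun \<sigma> a b v = 0" using True by (simp add: gfun_def)
  then show ?thesis using True ab by (intro exI[of _ "{a}"]) auto
next
  case False
  have sp: "sigma_ginv \<sigma> v > 0" by (rule sg_pos[OF tend v])
  then obtain h where h: "sigma_ginv \<sigma> v = ereal h" "h > 0" using False by (cases "sigma_ginv \<sigma> v") auto
  obtain A where A: "finite A" "A \<noteq> {}" "A \<subseteq> {a..b}" "real (card A) \<le> (b - a) / (2 * h) + 1"
      "\<forall>t\<in>{a..b}. \<exists>s\<in>A. \<bar>t - s\<bar> < h"
    using grid_exists[OF ab h(2)] by blast
  have "gfun \<sigma> a b v = (b - a) / (2 * h)" using h by (simp add: gfun_def)
  then show ?thesis using A h by (intro exI[of _ A]) auto
qed

lemma aux_frac: "(q::real) \<noteq> 0 \<Longrightarrow> d \<noteq> 0 \<Longrightarrow> (q * m)\<^sup>2 / (q * d) = q * (m\<^sup>2 / d)"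
  by (simp add: power2_eq_square field_simps)

lemma geom_weights: "(\<Sum>j<K. \<theta>^j * (1 - \<theta>)) + \<theta>^K = (1::real)"
  by (induction K) (auto simp: algebra_simps)

lemma jensen_r:
  fixes r :: "real \<Rightarrow> real" and \<theta> :: real
  assumes cv: "convex_on {0..} (\<lambda>y. r (exp y))" and th: "0 < \<theta>" "\<theta> < 1"
    and y: "\<And>j. j < K \<Longrightarrow> y j \<ge> 0"
  shows "r (exp (\<Sum>j<K. \<theta>^j * (1 - \<theta>) * y j)) \<le> (\<Sum>j<K. \<theta>^j * (1 - \<theta>) * r (exp (y j))) + \<theta>^K * r 1"
proof -
  define w where "w j = (if j < K then \<theta>^j * (1 - \<theta>) else \<theta>^K)" for j
  define z where "z j = (if j < K then y j else 0)" for j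
  have S: "{..K} = insert K {..<K}" by auto
  have ws: "(\<Sum>j\<in>{..K}. w j) = 1"
    unfolding S w_def using geom_weights[where K=K and \<theta>=\<theta>] by (simp add: add.commute)
  have "r (exp (\<Sum>j\<in>{..K}. w j *\<^sub>R z j)) \<le> (\<Sum>j\<in>{..K}. w j * r (exp (z j)))"
    using th y by (intro convex_on_sum[OF _ _ cv ws]) (auto simp: w_def z_def)
  moreover have "(\<Sum>j\<in>{..K}. w j *\<^sub>R z j) = (\<Sum>j<K. \<theta>^j * (1 - \<theta>) * y j)"
    unfolding S w_def z_def by simp
  moreover have "(\<Sum>j\<in>{..K}. w j * r (exp (z j))) = (\<Sum>j<K. \<theta>^j * (1 - \<theta>) * r (exp (y j))) + \<theta>^K * r 1"
    unfolding S w_def z_def by simp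
  ultimately show ?thesis by simp
qed

lemma step_integral:
  fixes r \<sigma> :: "real \<Rightarrow> real"
  assumes ab: "a < b" and tend: "(\<sigma> \<longlongrightarrow> 0) (at_right 0)"
    and rm: "mono_on {1..} r" and rp: "\<forall>x\<ge>1. r x \<ge> 0"
    and th: "0 < \<theta>" "\<theta> < 1" and m: "m > 0"
  shows "ennreal (\<theta> * m * ((\<Sum>j<K. \<theta>^j * (1 - \<theta>) * r (gfun \<sigma> a b (\<theta>^(j+1) * m) + 1)) + \<theta>^K * r 1))
           \<le> I_tilde r \<sigma> a b (\<theta> * m)"
proof -
  define f where "f v = r (gfun \<sigma> a b v + 1)" for v
  define c where "c j = (if j < K then f (\<theta>^(j+1) * m) else r 1)" for j
  define lo where "lo j = (if j < K then \<theta>^(j+2) * m else 0)" for j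
  define hi where "hi j = \<theta>^(j+1) * m" for j :: nat
  have gnn: "\<And>v. gfun \<sigma> a b v \<ge> 0" using ab by (intro gfun_nonneg) simp
  have f_ge: "f v \<ge> r 1" for v
    unfolding f_def using gnn[of v] by (intro mono_onD[OF rm]) auto
  have r1: "r 1 \<ge> 0" using rp by simp
  have c0: "c j \<ge> 0" for j using f_ge[of "\<theta>^(j+1) * m"] r1 unfolding c_def by auto
  have lohi: "lo j \<le> hi j" for j
  proof -
    have "\<theta>^(j+2) \<le> \<theta>^(j+1)" using th by (intro power_decreasing) auto
    then show ?thesis unfolding lo_def hi_def using m th by (auto intro: mult_right_mono)
  qed
  have lo0: "lo j \<ge> 0" for j unfolding lo_def using th m by auto
  have hile: "hi j \<le> \<theta> * m" for j
  proof -
    have "\<theta>^(j+1) \<le> \<theta>^1" using th by (intro power_decreasing) auto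
    then show ?thesis unfolding hi_def using m by (auto intro: mult_right_mono)
  qed
  have disj: "hi j \<le> lo i" if "i < j" "j \<le> K" for i j
  proof -
    have "i < K" using that by simp
    moreover have "\<theta>^(j+1) \<le> \<theta>^(i+2)" using th that by (intro power_decreasing) auto
    ultimately show ?thesis unfolding lo_def hi_def using m by (auto intro: mult_right_mono)
  qed
  define s where "s v = (\<Sum>j\<in>{..K}. ennreal (c j) * indicator {lo j<..hi j} v)" for v
  have pw: "s v \<le> ennreal (f v) * indicator {0..\<theta> * m} v" for v
  proof (cases "\<exists>j0\<le>K. v \<in> {lo j0<..hi j0}")
    case False
    then have "s v = 0" unfolding s_def by (intro sum.neutral) auto
    then show ?thesis by simp
  next
    case True
    then obtain j0 where j0: "j0 \<le> K" "v \<in> {lo j0<..hi j0}" by blast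
    have others: "indicator {lo j<..hi j} v = (0::ennreal)" if "j \<le> K" "j \<noteq> j0" for j
    proof -
      have "v \<notin> {lo j<..hi j}"
      proof (cases "j < j0")
        case True then show ?thesis using disj[of j j0] j0 by auto
      next
        case False then have "j0 < j" using that by simp
        then show ?thesis using disj[of j0 j] j0 that by auto
      qed
      then show ?thesis by simp
    qed
    have "s v = ennreal (c j0) * indicator {lo j0<..hi j0} v + (\<Sum>j\<in>{..K} - {j0}. ennreal (c j) * indicator {lo j<..hi j} v)"
      unfolding s_def using j0(1) by (subst sum.remove[of _ j0]) auto
    also have "(\<Sum>j\<in>{..K} - {j0}. ennreal (c j) * indicator {lo j<..hi j} v) = 0"
      using others by (intro sum.neutral) auto
    finally have sv: "s v = ennreal (c j0)" using j0 by simp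
    have vpos: "v > 0" using j0 lo0[of j0] by auto
    have vin: "v \<in> {0..\<theta> * m}" using j0 vpos hile[of j0] by auto
    have "c j0 \<le> f v"
    proof (cases "j0 < K")
      case True
      have "gfun \<sigma> a b (\<theta>^(j0+1) * m) \<le> gfun \<sigma> a b v"
        using j0 vpos by (intro gfun_antimono[OF tend]) (auto simp: hi_def ab less_imp_le)
      then show ?thesis unfolding c_def f_def using True gnn
        by (auto intro!: mono_onD[OF rm])
    next
      case False then show ?thesis unfolding c_def using f_ge by simp
    qed
    then show ?thesis using sv vin by (simp add: ennreal_leI)
  qed
  have "(\<integral>\<^sup>+v. s v \<partial>lborel) = (\<Sum>j\<in>{..K}. ennreal (c j) * emeasure lborel {lo j<..hi j})"
    unfolding s_def by (subst nn_integral_sum) (auto intro!: sum.cong nn_integral_cmult_indicator)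
  also have "\<dots> = (\<Sum>j\<in>{..K}. ennreal (c j * (hi j - lo j)))"
    using lohi c0 by (intro sum.cong refl) (simp add: emeasure_lborel_Ioc ennreal_mult)
  also have "\<dots> = ennreal (\<Sum>j\<in>{..K}. c j * (hi j - lo j))"
    using lohi c0 by (intro sum_ennreal) simp
  also have "(\<Sum>j\<in>{..K}. c j * (hi j - lo j)) = \<theta> * m * ((\<Sum>j<K. \<theta>^j * (1 - \<theta>) * r (gfun \<sigma> a b (\<theta>^(j+1) * m) + 1)) + \<theta>^K * r 1)"
  proof -
    have S: "{..K} = insert K {..<K}" by auto
    have "(\<Sum>j\<in>{..K}. c j * (hi j - lo j)) = (\<Sum>j<K. f (\<theta>^(j+1) * m) * (\<theta>^(j+1) * m - \<theta>^(j+2) * m)) + r 1 * (\<theta>^(K+1) * m)"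
      unfolding S c_def hi_def lo_def by (simp add: add.commute)
    also have "(\<Sum>j<K. f (\<theta>^(j+1) * m) * (\<theta>^(j+1) * m - \<theta>^(j+2) * m)) = \<theta> * m * (\<Sum>j<K. \<theta>^j * (1 - \<theta>) * f (\<theta>^(j+1) * m))"
      by (simp add: sum_distrib_left algebra_simps)
    finally show ?thesis unfolding f_def by (simp add: algebra_simps)
  qed
  finally have eq: "(\<integral>\<^sup>+v. s v \<partial>lborel) = ennreal (\<theta> * m * ((\<Sum>j<K. \<theta>^j * (1 - \<theta>) * r (gfun \<sigma> a b (\<theta>^(j+1) * m) + 1)) + \<theta>^K * r 1))" .
  have "(\<integral>\<^sup>+v. s v \<partial>lborel) \<le> I_tilde r \<sigma> a b (\<theta> * m)"
    unfolding I_tilde_gfun using pw unfolding f_def by (intro nn_integral_mono) simp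
  then show ?thesis using eq by simp
qed

lemma entropy_bound:
  fixes r \<sigma> :: "real \<Rightarrow> real" and n :: "nat \<Rightarrow> real"
  assumes ab: "a < b" and tend: "(\<sigma> \<longlongrightarrow> 0) (at_right 0)"
    and rm: "mono_on {1..} r" and rp: "\<forall>x\<ge>1. r x \<ge> 0"
    and cv: "convex_on {0..} (\<lambda>y. r (exp y))"
    and th: "0 < \<theta>" "\<theta> < 1" and m: "m > 0"
    and n: "\<And>j. j < K \<Longrightarrow> 1 \<le> n j \<and> n j \<le> gfun \<sigma> a b (\<theta>^(j+1) * m) + 1"
  shows "ennreal (exp (\<Sum>j<K. \<theta>^j * (1 - \<theta>) * ln (n j))) \<le> r_ginv r (I_tilde r \<sigma> a b (\<theta> * m) / ennreal (\<theta> * m))"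
proof -
  define u where "u = exp (\<Sum>j<K. \<theta>^j * (1 - \<theta>) * ln (n j))"
  define Q where "Q = (\<Sum>j<K. \<theta>^j * (1 - \<theta>) * r (gfun \<sigma> a b (\<theta>^(j+1) * m) + 1)) + \<theta>^K * r 1"
  have u1: "1 \<le> u" unfolding u_def using th n by (auto intro!: sum_nonneg)
  have "r u \<le> (\<Sum>j<K. \<theta>^j * (1 - \<theta>) * r (exp (ln (n j)))) + \<theta>^K * r 1"
    unfolding u_def using n by (intro jensen_r[OF cv th]) auto
  also have "\<dots> \<le> Q" unfolding Q_def
  proof (intro add_mono order_refl sum_mono mult_left_mono)
    fix j assume j: "j \<in> {..<K}"
    then have "1 \<le> n j" "n j \<le> gfun \<sigma> a b (\<theta>^(j+1) * m) + 1" using n by auto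
    then show "r (exp (ln (n j))) \<le> r (gfun \<sigma> a b (\<theta>^(j+1) * m) + 1)"
      by (intro mono_onD[OF rm]) auto
    show "0 \<le> \<theta>^j * (1 - \<theta>)" using th by simp
  qed
  finally have ruQ: "r u \<le> Q" .
  have tm: "\<theta> * m > 0" using th m by simp
  have "ennreal Q * ennreal (\<theta> * m) = ennreal (\<theta> * m * Q)"
  proof -
    have "Q \<ge> r u" by (rule ruQ)
    moreover have "r u \<ge> 0" using rp u1 by simp
    ultimately show ?thesis using tm by (simp add: ennreal_mult[symmetric] mult.commute)
  qed
  also have "\<dots> \<le> I_tilde r \<sigma> a b (\<theta> * m)"
    unfolding Q_def by (rule step_integral[OF ab tend rm rp th m])
  finally have "ennreal Q * ennreal (\<theta> * m) \<le> I_tilde r \<sigma> a b (\<theta> * m)" .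
  then have "ennreal Q * ennreal (\<theta> * m) / ennreal (\<theta> * m) \<le> I_tilde r \<sigma> a b (\<theta> * m) / ennreal (\<theta> * m)"
    by (rule divide_right_mono_ennreal)
  then have "ennreal Q \<le> I_tilde r \<sigma> a b (\<theta> * m) / ennreal (\<theta> * m)"
  proof -
    have "ennreal Q * ennreal (\<theta> * m) / ennreal (\<theta> * m) = ennreal Q"
      using tm by (intro ennreal_mult_divide_eq) auto
    then show ?thesis using \<open>ennreal Q * ennreal (\<theta> * m) / ennreal (\<theta> * m) \<le> _\<close> by simp
  qed
  then have "ennreal (r u) \<le> I_tilde r \<sigma> a b (\<theta> * m) / ennreal (\<theta> * m)"
    using ruQ by (meson ennreal_leI order_trans)
  then have "ennreal u \<le> r_ginv r (I_tilde r \<sigma> a b (\<theta> * m) / ennreal (\<theta> * m))"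
    unfolding r_ginv_def using u1 by (intro SUP_upper) auto
  then show ?thesis unfolding u_def .
qed

context
  fixes M :: "'a measure" and X :: "real \<Rightarrow> 'a \<Rightarrow> real"
    and a b m \<theta> lam :: real and \<sigma> r :: "real \<Rightarrow> real"
  assumes P: "prob_space M" and ab: "a < b"
    and GP: "centered_gaussian_process M {a..b} X"
    and bdd: "bdd_above ((\<lambda>t. sqrt (\<integral>\<omega>. (X t \<omega>)\<^sup>2 \<partial>M)) ` {a..b})"
    and mdef: "m = (SUP t\<in>{a..b}. sqrt (\<integral>\<omega>. (X t \<omega>)\<^sup>2 \<partial>M))"
    and m0: "m > 0"
    and tend: "(\<sigma> \<longlongrightarrow> 0) (at_right 0)"
    and Hs: "\<forall>h>0. \<forall>s\<in>{a..b}. \<forall>t\<in>{a..b}. \<bar>t - s\<bar> < h \<longrightarrow>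
            sqrt (\<integral>\<omega>. (X t \<omega> - X s \<omega>)\<^sup>2 \<partial>M) \<le> \<sigma> h"
    and rm: "mono_on {1..} r" and rp: "\<forall>x\<ge>1. r x \<ge> 0"
    and cv: "convex_on {0..} (\<lambda>y. r (exp y))"
    and th0: "0 < \<theta>" and th1: "\<theta> < 1" and lam0: "lam > 0"
begin

lemma Xmeas: "t \<in> {a..b} \<Longrightarrow> X t \<in> borel_measurable M"
  using gp_single[OF GP] by (simp add: centered_normal_rv_def)

lemma var_le: assumes t: "t \<in> {a..b}" shows "(\<integral>\<omega>. (X t \<omega>)\<^sup>2 \<partial>M) \<le> m\<^sup>2"
proof -
  have "sqrt (\<integral>\<omega>. (X t \<omega>)\<^sup>2 \<partial>M) \<le> m" unfolding mdef using t bdd by (intro cSUP_upper) auto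
  moreover have "(\<integral>\<omega>. (X t \<omega>)\<^sup>2 \<partial>M) \<ge> 0" by simp
  ultimately show ?thesis by (metis real_sqrt_le_iff real_sqrt_pow2 sqrt_le_D)
qed

lemma link_le:
  assumes s: "s \<in> {a..b}" and t: "t \<in> {a..b}" and lt: "ereal \<bar>s - t\<bar> < sigma_ginv \<sigma> v"
  shows "(\<integral>\<omega>. (X s \<omega> - X t \<omega>)\<^sup>2 \<partial>M) \<le> v\<^sup>2"
proof -
  obtain h where h: "h > 0" "\<sigma> h \<le> v" "\<bar>s - t\<bar> < h" using sg_lt[OF lt] by blast
  have "sqrt (\<integral>\<omega>. (X s \<omega> - X t \<omega>)\<^sup>2 \<partial>M) \<le> \<sigma> h" using Hs h s t by blast
  then have q: "sqrt (\<integral>\<omega>. (X s \<omega> - X t \<omega>)\<^sup>2 \<partial>M) \<le> v" using h by simp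
  have "(\<integral>\<omega>. (X s \<omega> - X t \<omega>)\<^sup>2 \<partial>M) \<ge> 0" by simp
  then show ?thesis using q by (metis real_sqrt_pow2 power_mono real_sqrt_ge_zero)
qed

lemma finite_bound:
  assumes finT: "finite T" and neT: "T \<noteq> {}" and subT: "T \<subseteq> {a..b}" and K1: "K \<ge> 1"
  shows "(\<integral>\<^sup>+\<omega>. (SUP t\<in>T. ennreal (exp (lam * \<bar>X t \<omega>\<bar>))) \<partial>M)
    \<le> 2 * ennreal (exp (lam\<^sup>2 * m\<^sup>2 / (2 * (1 - \<theta>)\<^sup>2)))
        * r_ginv r (I_tilde r \<sigma> a b (\<theta> * m) / ennreal (\<theta> * m)) * ennreal (exp (\<theta>^K * ln (real (card T))))"
proof -
  define \<epsilon> where "\<epsilon> k = \<theta>^k * m" for k :: nat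
  have \<epsilon>0: "\<epsilon> k > 0" for k unfolding \<epsilon>_def using th0 m0 by simp
  have "\<forall>k. \<exists>A. finite A \<and> A \<noteq> {} \<and> A \<subseteq> {a..b} \<and> real (card A) \<le> gfun \<sigma> a b (\<epsilon> k) + 1 \<and>
             (\<forall>t\<in>{a..b}. \<exists>s\<in>A. ereal \<bar>t - s\<bar> < sigma_ginv \<sigma> (\<epsilon> k))"
    using grid_sg[OF ab tend \<epsilon>0] by blast
  then obtain A where A: "\<And>k. finite (A k)" "\<And>k. A k \<noteq> {}" "\<And>k. A k \<subseteq> {a..b}"
      "\<And>k. real (card (A k)) \<le> gfun \<sigma> a b (\<epsilon> k) + 1"
      "\<And>k t. t \<in> {a..b} \<Longrightarrow> \<exists>s\<in>A k. ereal \<bar>t - s\<bar> < sigma_ginv \<sigma> (\<epsilon> k)"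
    by metis
  have "\<forall>k t. \<exists>s. t \<in> {a..b} \<longrightarrow> s \<in> A k \<and> ereal \<bar>t - s\<bar> < sigma_ginv \<sigma> (\<epsilon> k)"
    using A(5) by blast
  then obtain \<pi> where \<pi>: "\<And>k t. t \<in> {a..b} \<Longrightarrow> \<pi> k t \<in> A k \<and> ereal \<bar>t - \<pi> k t\<bar> < sigma_ginv \<sigma> (\<epsilon> k)"
    by metis
  define PS where "PS j = (if j < K then A (j+1) else T)" for j
  define Z where "Z j s \<omega> = (if j = 0 then X s \<omega> else X s \<omega> - X (\<pi> j s) \<omega>)" for j s \<omega>
  define W where "W j \<omega> = (MAX s\<in>PS j. \<bar>Z j s \<omega>\<bar>)" for j \<omega>
  define pj where "pj j = (if j < K then \<theta>^j * (1 - \<theta>) else \<theta>^K)" for j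
  define vj where "vj j = (\<epsilon> j)\<^sup>2" for j
  define nj where "nj j = real (card (PS j))" for j
  define B where "B j = 2 * nj j * exp ((lam / pj j)\<^sup>2 * vj j / 2)" for j
  have PSfin: "finite (PS j)" for j unfolding PS_def using A finT by auto
  have PSne: "PS j \<noteq> {}" for j unfolding PS_def using A neT by auto
  have PSsub: "PS j \<subseteq> {a..b}" for j unfolding PS_def using A subT by auto
  have pjpos: "pj j > 0" for j unfolding pj_def using th0 th1 by auto
  have nj1: "nj j \<ge> 1" for j
  proof -
    have "card (PS j) \<noteq> 0" using PSfin PSne by simp
    then show ?thesis unfolding nj_def by linarith
  qed
  have Bpos: "B j > 0" for j unfolding B_def using nj1[of j] by simp
  have Zn: "centered_normal_rv M (Z j s)" if "s \<in> PS j" for j s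
  proof -
    have s: "s \<in> {a..b}" using that PSsub by blast
    show ?thesis
    proof (cases "j = 0")
      case True then show ?thesis unfolding Z_def using gp_single[OF GP s] by simp
    next
      case False
      have "\<pi> j s \<in> {a..b}" using \<pi>[OF s] A(3) by blast
      then show ?thesis unfolding Z_def using False gp_diff[OF GP s] by simp
    qed
  qed
  have Zv: "(\<integral>\<omega>. (Z j s \<omega>)\<^sup>2 \<partial>M) \<le> vj j" if "s \<in> PS j" for j s
  proof -
    have s: "s \<in> {a..b}" using that PSsub by blast
    show ?thesis
    proof (cases "j = 0")
      case True then show ?thesis unfolding Z_def vj_def \<epsilon>_def using var_le[OF s] by simp
    next
      case False
      have "\<pi> j s \<in> {a..b}" using \<pi>[OF s] A(3) by blast
      then show ?thesis unfolding Z_def vj_def using False link_le[OF s _ conjunct2[OF \<pi>[OF s]]] by simp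
    qed
  qed
  have Zm: "Z j s \<in> borel_measurable M" if "s \<in> PS j" for j s
    using Zn[OF that] by (simp add: centered_normal_rv_def)
  have Wm: "(\<lambda>\<omega>. lam * W j \<omega>) \<in> borel_measurable M" for j
    unfolding W_def by (intro borel_measurable_times borel_measurable_const borel_measurable_Max PSfin
        borel_measurable_abs Zm)
  have Wb: "(\<integral>\<^sup>+\<omega>. ennreal (exp (lam * W j \<omega> / pj j)) \<partial>M) \<le> ennreal (B j)" for j
  proof -
    have "(\<integral>\<^sup>+\<omega>. ennreal (exp (lam * W j \<omega> / pj j)) \<partial>M)
        = (\<integral>\<^sup>+\<omega>. ennreal (exp ((lam / pj j) * (MAX s\<in>PS j. \<bar>Z j s \<omega>\<bar>))) \<partial>M)"
      unfolding W_def by simp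
    also have "\<dots> \<le> ennreal (2 * real (card (PS j)) * exp ((lam / pj j)\<^sup>2 * vj j / 2))"
      by (rule max_gauss_bound[OF P PSfin PSne Zn Zv])
    finally show ?thesis unfolding B_def nj_def .
  qed
  have ps1: "(\<Sum>j\<in>{..K}. pj j) = 1"
  proof -
    have S: "{..K} = insert K {..<K}" by auto
    show ?thesis unfolding S pj_def using geom_weights[where K=K and \<theta>=\<theta>] by (simp add: add.commute)
  qed
  have hold: "(\<integral>\<^sup>+\<omega>. ennreal (exp (\<Sum>j\<in>{..K}. lam * W j \<omega>)) \<partial>M) \<le> ennreal (exp (\<Sum>j\<in>{..K}. pj j * ln (B j)))"
    by (rule holder_exp[OF _ pjpos ps1 Wm Bpos Wb]) simp
  have Wge: "\<bar>Z j s \<omega>\<bar> \<le> W j \<omega>" if "s \<in> PS j" for j s \<omega>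
    unfolding W_def using PSfin that by (intro Max_ge) auto
  have chain: "Suc i \<le> K \<Longrightarrow> s \<in> A (Suc i) \<Longrightarrow> \<bar>X s \<omega>\<bar> \<le> (\<Sum>l\<le>i. W l \<omega>)" for i s \<omega>
  proof (induction i arbitrary: s)
    case 0
    then have "s \<in> PS 0" unfolding PS_def by simp
    then have "\<bar>Z 0 s \<omega>\<bar> \<le> W 0 \<omega>" by (rule Wge)
    then show ?case unfolding Z_def by simp
  next
    case (Suc i)
    have sP: "s \<in> PS (Suc i)" unfolding PS_def using Suc.prems by simp
    then have sab: "s \<in> {a..b}" using PSsub by blast
    have "\<pi> (Suc i) s \<in> A (Suc i)" using \<pi>[OF sab] by blast
    then have IH: "\<bar>X (\<pi> (Suc i) s) \<omega>\<bar> \<le> (\<Sum>l\<le>i. W l \<omega>)" using Suc.IH Suc.prems by simp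
    have "\<bar>Z (Suc i) s \<omega>\<bar> \<le> W (Suc i) \<omega>" using Wge[OF sP] .
    then have "\<bar>X s \<omega> - X (\<pi> (Suc i) s) \<omega>\<bar> \<le> W (Suc i) \<omega>" unfolding Z_def by simp
    then show ?case using IH by simp
  qed
  have pw: "(SUP t\<in>T. ennreal (exp (lam * \<bar>X t \<omega>\<bar>))) \<le> ennreal (exp (\<Sum>j\<in>{..K}. lam * W j \<omega>))" for \<omega>
  proof (intro SUP_least ennreal_leI)
    fix t assume t: "t \<in> T"
    have tP: "t \<in> PS K" unfolding PS_def using t by simp
    have tab: "t \<in> {a..b}" using t subT by blast
    obtain i where i: "K = Suc i" using K1 by (cases K) auto
    have "\<pi> K t \<in> A (Suc i)" using \<pi>[OF tab] i by simp
    then have c1: "\<bar>X (\<pi> K t) \<omega>\<bar> \<le> (\<Sum>l\<le>i. W l \<omega>)" using chain[of i] i by simp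
    have "\<bar>Z K t \<omega>\<bar> \<le> W K \<omega>" by (rule Wge[OF tP])
    then have c2: "\<bar>X t \<omega> - X (\<pi> K t) \<omega>\<bar> \<le> W K \<omega>" unfolding Z_def using K1 by simp
    have "\<bar>X t \<omega>\<bar> \<le> (\<Sum>l\<le>K. W l \<omega>)" using c1 c2 i by simp
    then have "lam * \<bar>X t \<omega>\<bar> \<le> (\<Sum>j\<in>{..K}. lam * W j \<omega>)" using lam0 by (simp add: sum_distrib_left[symmetric])
    then show "exp (lam * \<bar>X t \<omega>\<bar>) \<le> exp (\<Sum>j\<in>{..K}. lam * W j \<omega>)" by simp
  qed
  have step1: "(\<integral>\<^sup>+\<omega>. (SUP t\<in>T. ennreal (exp (lam * \<bar>X t \<omega>\<bar>))) \<partial>M) \<le> ennreal (exp (\<Sum>j\<in>{..K}. pj j * ln (B j)))"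
  proof -
    have "(\<integral>\<^sup>+\<omega>. (SUP t\<in>T. ennreal (exp (lam * \<bar>X t \<omega>\<bar>))) \<partial>M) \<le> (\<integral>\<^sup>+\<omega>. ennreal (exp (\<Sum>j\<in>{..K}. lam * W j \<omega>)) \<partial>M)"
      by (intro nn_integral_mono pw)
    then show ?thesis using hold by (rule order_trans)
  qed
  define E where "E = (\<Sum>j<K. \<theta>^j * (1 - \<theta>) * ln (real (card (A (j+1)))))"
  define G where "G = \<theta>^K * ln (real (card T))"
  define H where "H = lam\<^sup>2 * m\<^sup>2 / (2 * (1 - \<theta>)\<^sup>2)"
  have S: "{..K} = insert K {..<K}" by auto
  have lnB: "pj j * ln (B j) = pj j * ln 2 + pj j * ln (nj j) + lam\<^sup>2 / 2 * (vj j / pj j)" for j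
  proof -
    have "ln (B j) = ln 2 + ln (nj j) + (lam / pj j)\<^sup>2 * vj j / 2"
      unfolding B_def using nj1[of j] by (simp add: ln_mult)
    then show ?thesis using pjpos[of j] by (simp add: algebra_simps power2_eq_square)
  qed
  have sum_eq: "(\<Sum>j\<in>{..K}. pj j * ln (B j)) = ln 2 + (E + G) + lam\<^sup>2 / 2 * (\<Sum>j\<in>{..K}. vj j / pj j)"
  proof -
    have "(\<Sum>j\<in>{..K}. pj j * ln (B j)) = ln 2 * (\<Sum>j\<in>{..K}. pj j) + (\<Sum>j\<in>{..K}. pj j * ln (nj j)) + lam\<^sup>2 / 2 * (\<Sum>j\<in>{..K}. vj j / pj j)"
      unfolding lnB sum.distrib sum_distrib_left[symmetric] sum_distrib_right[symmetric] by (simp add: mult.commute)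
    moreover have "(\<Sum>j\<in>{..K}. pj j * ln (nj j)) = E + G"
      unfolding S E_def G_def pj_def nj_def PS_def by (simp add: add.commute)
    ultimately show ?thesis using ps1 by simp
  qed
  have vsum: "(\<Sum>j\<in>{..K}. vj j / pj j) \<le> m\<^sup>2 / (1 - \<theta>)\<^sup>2"
  proof -
    define Sg where "Sg = (\<Sum>j<K. \<theta>^j)"
    have Sg: "(1 - \<theta>) * Sg = 1 - \<theta>^K"
      unfolding Sg_def using geom_weights[where K=K and \<theta>=\<theta>] by (simp add: sum_distrib_left mult.commute)
    have "(\<Sum>j\<in>{..K}. vj j / pj j) = (\<Sum>j<K. \<theta>^j * (m\<^sup>2 / (1 - \<theta>))) + \<theta>^K * m\<^sup>2"
    proof -
      have "(\<Sum>j\<in>{..K}. vj j / pj j) = (\<Sum>j<K. (\<theta>^j * m)\<^sup>2 / (\<theta>^j * (1 - \<theta>))) + (\<theta>^K * m)\<^sup>2 / \<theta>^K"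
        unfolding S vj_def pj_def \<epsilon>_def by (simp add: add.commute)
      also have "(\<Sum>j<K. (\<theta>^j * m)\<^sup>2 / (\<theta>^j * (1 - \<theta>))) = (\<Sum>j<K. \<theta>^j * (m\<^sup>2 / (1 - \<theta>)))"
      proof (intro sum.cong refl)
        fix j
        have "\<theta>^j > 0" "1 - \<theta> > 0" using th0 th1 by auto
        then show "(\<theta>^j * m)\<^sup>2 / (\<theta>^j * (1 - \<theta>)) = \<theta>^j * (m\<^sup>2 / (1 - \<theta>))"
          by (intro aux_frac) (use th0 in auto)
      qed
      also have "(\<theta>^K * m)\<^sup>2 / \<theta>^K = \<theta>^K * m\<^sup>2"
        using th0 by (simp add: power2_eq_square field_simps)
      finally show ?thesis .
    qed
    also have "\<dots> = Sg * m\<^sup>2 / (1 - \<theta>) + \<theta>^K * m\<^sup>2"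
      unfolding Sg_def by (simp add: sum_distrib_right sum_divide_distrib)
    also have "\<dots> \<le> m\<^sup>2 / (1 - \<theta>)\<^sup>2"
    proof -
      have d: "(1 - \<theta>) > 0" using th1 by simp
      have tk: "0 \<le> \<theta>^K * m\<^sup>2" using th0 by simp
      have "(Sg * m\<^sup>2 / (1 - \<theta>) + \<theta>^K * m\<^sup>2) * (1 - \<theta>)\<^sup>2 = ((1 - \<theta>) * Sg) * m\<^sup>2 + \<theta>^K * m\<^sup>2 * (1 - \<theta>)\<^sup>2"
        using d by (simp add: power2_eq_square field_simps)
      also have "\<dots> = (1 - \<theta>^K) * m\<^sup>2 + \<theta>^K * m\<^sup>2 * (1 - \<theta>)\<^sup>2" unfolding Sg ..
      also have "\<dots> \<le> (1 - \<theta>^K) * m\<^sup>2 + \<theta>^K * m\<^sup>2 * 1"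
        using th0 th1 tk by (intro add_left_mono mult_left_mono) (auto simp: power2_eq_square mult_le_one)
      also have "\<dots> = m\<^sup>2" by (simp add: algebra_simps)
      finally have "(Sg * m\<^sup>2 / (1 - \<theta>) + \<theta>^K * m\<^sup>2) * (1 - \<theta>)\<^sup>2 \<le> m\<^sup>2" .
      then show ?thesis using d by (simp add: field_simps)
    qed
    finally show ?thesis .
  qed
  have "(\<Sum>j\<in>{..K}. pj j * ln (B j)) \<le> ln 2 + H + E + G"
  proof -
    have "lam\<^sup>2 / 2 * (\<Sum>j\<in>{..K}. vj j / pj j) \<le> lam\<^sup>2 / 2 * (m\<^sup>2 / (1 - \<theta>)\<^sup>2)"
      by (intro mult_left_mono vsum) simp
    then show ?thesis unfolding sum_eq H_def by simp
  qed
  then have "exp (\<Sum>j\<in>{..K}. pj j * ln (B j)) \<le> 2 * exp H * exp E * exp G"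
  proof -
    assume h: "(\<Sum>j\<in>{..K}. pj j * ln (B j)) \<le> ln 2 + H + E + G"
    have "exp (\<Sum>j\<in>{..K}. pj j * ln (B j)) \<le> exp (ln 2 + H + E + G)" using h by simp
    also have "\<dots> = 2 * exp H * exp E * exp G" by (simp add: exp_add)
    finally show ?thesis .
  qed
  then have step2: "ennreal (exp (\<Sum>j\<in>{..K}. pj j * ln (B j))) \<le> 2 * ennreal (exp H) * ennreal (exp E) * ennreal (exp G)"
  proof -
    assume h: "exp (\<Sum>j\<in>{..K}. pj j * ln (B j)) \<le> 2 * exp H * exp E * exp G"
    have "ennreal (exp (\<Sum>j\<in>{..K}. pj j * ln (B j))) \<le> ennreal (2 * exp H * exp E * exp G)"
      using h by (rule ennreal_leI)
    also have "\<dots> = 2 * ennreal (exp H) * ennreal (exp E) * ennreal (exp G)"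
      by (simp add: ennreal_mult)
    finally show ?thesis .
  qed
  have Ebound: "ennreal (exp E) \<le> r_ginv r (I_tilde r \<sigma> a b (\<theta> * m) / ennreal (\<theta> * m))"
    unfolding E_def
  proof (rule entropy_bound[OF ab tend rm rp cv th0 th1 m0])
    fix j assume "j < K"
    have "card (A (j+1)) \<noteq> 0" using A(1,2) by simp
    then show "1 \<le> real (card (A (j+1))) \<and> real (card (A (j+1))) \<le> gfun \<sigma> a b (\<theta>^(j+1) * m) + 1"
      using A(4)[of "j+1"] unfolding \<epsilon>_def by simp
  qed
  have "2 * ennreal (exp H) * ennreal (exp E) * ennreal (exp G)
     \<le> 2 * ennreal (exp H) * r_ginv r (I_tilde r \<sigma> a b (\<theta> * m) / ennreal (\<theta> * m)) * ennreal (exp G)"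
    by (intro mult_right_mono mult_left_mono Ebound) auto
  then show ?thesis using step1 step2 unfolding H_def G_def by (meson order_trans)
qed

lemma finite_bound2:
  assumes finT: "finite T" and subT: "T \<subseteq> {a..b}"
  shows "(\<integral>\<^sup>+\<omega>. (SUP t\<in>T. ennreal (exp (lam * \<bar>X t \<omega>\<bar>))) \<partial>M)
    \<le> 2 * ennreal (exp (lam\<^sup>2 * m\<^sup>2 / (2 * (1 - \<theta>)\<^sup>2)))
        * r_ginv r (I_tilde r \<sigma> a b (\<theta> * m) / ennreal (\<theta> * m))"
    (is "?L \<le> ?C")
proof (cases "T = {}")
  case True then show ?thesis by (simp add: bot_ennreal)
next
  case False
  define c where "c K = ennreal (exp (\<theta>^K * ln (real (card T))))" for K :: nat
  have le: "?L \<le> ?C * c K" if "K \<ge> 1" for K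
    unfolding c_def using finite_bound[OF finT False subT that] .
  have "(\<lambda>K. \<theta>^K * ln (real (card T))) \<longlonglongrightarrow> 0 * ln (real (card T))"
    using th0 th1 by (intro tendsto_mult LIMSEQ_power_zero tendsto_const) auto
  then have "(\<lambda>K. exp (\<theta>^K * ln (real (card T)))) \<longlonglongrightarrow> exp 0"
    by (intro tendsto_exp) simp
  then have "c \<longlonglongrightarrow> ennreal 1" unfolding c_def by (intro tendsto_ennrealI) simp
  then have "(\<lambda>K. ?C * c K) \<longlonglongrightarrow> ?C * 1"
    by (intro tendsto_mult_ennreal tendsto_const) auto
  then have "?L \<le> ?C * 1"
    by (rule LIMSEQ_le_const) (use le in blast)
  then show ?thesis by simp
qed

lemma E_meas: "t \<in> {a..b} \<Longrightarrow> (\<lambda>\<omega>. ennreal (exp (lam * \<bar>X t \<omega>\<bar>))) \<in> borel_measurable M"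
proof -
  assume t: "t \<in> {a..b}"
  note [measurable] = Xmeas[OF t]
  show ?thesis by measurable
qed

lemma countable_bound:
  assumes cS: "countable S" and subS: "S \<subseteq> {a..b}"
  shows "(\<integral>\<^sup>+\<omega>. (SUP t\<in>S. ennreal (exp (lam * \<bar>X t \<omega>\<bar>))) \<partial>M)
    \<le> 2 * ennreal (exp (lam\<^sup>2 * m\<^sup>2 / (2 * (1 - \<theta>)\<^sup>2)))
        * r_ginv r (I_tilde r \<sigma> a b (\<theta> * m) / ennreal (\<theta> * m))"
    (is "?L \<le> ?C")
proof (cases "S = {}")
  case True then show ?thesis by (simp add: bot_ennreal)
next
  case False
  define f where "f = from_nat_into S"
  have rf: "range f = S" unfolding f_def using False cS by (rule range_from_nat_into)
  define F where "F n \<omega> = (SUP t\<in>f ` {..n}. ennreal (exp (lam * \<bar>X t \<omega>\<bar>)))" for n \<omega>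
  have Fsub: "f ` {..n} \<subseteq> {a..b}" for n using rf subS by auto
  have inc: "incseq F"
    unfolding incseq_def F_def le_fun_def by (auto intro!: SUP_subset_mono)
  have Fm: "F n \<in> borel_measurable M" for n
    unfolding F_def using Fsub[of n] by (intro borel_measurable_SUP E_meas) (auto simp del: atLeastAtMost_iff image_subset_iff)
  have eq: "(SUP t\<in>S. ennreal (exp (lam * \<bar>X t \<omega>\<bar>))) = (SUP n. F n \<omega>)" for \<omega>
  proof -
    have "S = (\<Union>n. f ` {..n})" using rf by auto
    then show ?thesis unfolding F_def by (simp add: SUP_UNION)
  qed
  have "?L = (\<integral>\<^sup>+\<omega>. (SUP n. F n \<omega>) \<partial>M)" unfolding eq ..
  also have "\<dots> = (SUP n. integral\<^sup>N M (F n))"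
    by (rule nn_integral_monotone_convergence_SUP[OF inc Fm])
  also have "\<dots> \<le> ?C"
    unfolding F_def using Fsub by (intro SUP_least finite_bound2) blast+
  finally show ?thesis .
qed

end

theorem corollary1:
  fixes M :: "'a measure" and X :: "real \<Rightarrow> 'a \<Rightarrow> real"
    and a b m \<theta> lam :: real and \<sigma> r :: "real \<Rightarrow> real"
  assumes "prob_space M" and "a < b"
    and "centered_gaussian_process M {a..b} X"
    and "separable_process M {a..b} X"
    and "bdd_above ((\<lambda>t. sqrt (\<integral>\<omega>. (X t \<omega>)\<^sup>2 \<partial>M)) ` {a..b})"
    and "m = (SUP t\<in>{a..b}. sqrt (\<integral>\<omega>. (X t \<omega>)\<^sup>2 \<partial>M))"
    and "m > 0"
    and "\<forall>h>0. \<sigma> h > 0" and "strict_mono_on {0<..} \<sigma>"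
    and "(\<sigma> \<longlongrightarrow> 0) (at_right 0)"
    and "\<forall>h>0. \<forall>s\<in>{a..b}. \<forall>t\<in>{a..b}. \<bar>t - s\<bar> < h \<longrightarrow>
            sqrt (\<integral>\<omega>. (X t \<omega> - X s \<omega>)\<^sup>2 \<partial>M) \<le> \<sigma> h"
    and "mono_on {1..} r" and "\<forall>x\<ge>1. r x \<ge> 0"
    and "convex_on {0..} (\<lambda>y. r (exp y))"
    and "0 < \<theta>" and "\<theta> < 1" and "lam > 0"
  shows "(\<integral>\<^sup>+ \<omega>. (SUP t\<in>{a..b}. ennreal (exp (lam * \<bar>X t \<omega>\<bar>))) \<partial>M)
         \<le> 2 * ennreal (exp (lam\<^sup>2 * m\<^sup>2 / (2 * (1 - \<theta>)\<^sup>2)))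
             * r_ginv r (I_tilde r \<sigma> a b (\<theta> * m) / ennreal (\<theta> * m))"
proof -
  note cb = countable_bound[OF assms(1,2,3,5,6,7,10,11,12,13,14,15,16,17)]
  obtain S N where S: "countable S" "S \<subseteq> {a..b}" "N \<in> sets M" "emeasure M N = 0"
    "\<And>\<omega> t. \<omega> \<in> space M - N \<Longrightarrow> t \<in> {a..b} \<Longrightarrow> (t, X t \<omega>) \<in> closure ((\<lambda>s. (s, X s \<omega>)) ` S)"
    using assms(4) unfolding separable_process_def by blast
  have key: "(SUP t\<in>{a..b}. ennreal (exp (lam * \<bar>X t \<omega>\<bar>))) \<le> (SUP s\<in>S. ennreal (exp (lam * \<bar>X s \<omega>\<bar>)))"
    if w: "\<omega> \<in> space M - N" for \<omega>
  proof (rule SUP_least)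
    fix t assume t: "t \<in> {a..b}"
    define C where "C = (SUP s\<in>S. ennreal (exp (lam * \<bar>X s \<omega>\<bar>)))"
    define Fs where "Fs = {p :: real \<times> real. ennreal (exp (lam * \<bar>snd p\<bar>)) \<le> C}"
    have c1: "continuous_on UNIV (\<lambda>p::real \<times> real. exp (lam * \<bar>snd p\<bar>))"
      by (intro continuous_intros)
    have c2: "continuous_on UNIV (\<lambda>p::real \<times> real. ennreal (exp (lam * \<bar>snd p\<bar>)))"
      by (rule continuous_on_ennreal[OF c1])
    have cl: "closed Fs" unfolding Fs_def
      by (rule closed_Collect_le[OF c2 continuous_on_const])
    have "(\<lambda>s. (s, X s \<omega>)) ` S \<subseteq> Fs" unfolding Fs_def C_def by (auto intro: SUP_upper)
    then have "closure ((\<lambda>s. (s, X s \<omega>)) ` S) \<subseteq> Fs" using cl by (rule closure_minimal)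
    then have "(t, X t \<omega>) \<in> Fs" using S(5)[OF w t] by blast
    then show "ennreal (exp (lam * \<bar>X t \<omega>\<bar>)) \<le> C" unfolding Fs_def by simp
  qed
  have nul: "N \<in> null_sets M" using S(3,4) by (simp add: null_sets_def)
  have "AE \<omega> in M. \<omega> \<notin> N" by (rule AE_not_in[OF nul])
  then have "AE \<omega> in M. (SUP t\<in>{a..b}. ennreal (exp (lam * \<bar>X t \<omega>\<bar>))) \<le> (SUP s\<in>S. ennreal (exp (lam * \<bar>X s \<omega>\<bar>)))"
    using AE_space by eventually_elim (auto intro: key)
  then have "(\<integral>\<^sup>+ \<omega>. (SUP t\<in>{a..b}. ennreal (exp (lam * \<bar>X t \<omega>\<bar>))) \<partial>M)
      \<le> (\<integral>\<^sup>+ \<omega>. (SUP s\<in>S. ennreal (exp (lam * \<bar>X s \<omega>\<bar>))) \<partial>M)"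
    by (rule nn_integral_mono_AE)
  also have "\<dots> \<le> 2 * ennreal (exp (lam\<^sup>2 * m\<^sup>2 / (2 * (1 - \<theta>)\<^sup>2)))
             * r_ginv r (I_tilde r \<sigma> a b (\<theta> * m) / ennreal (\<theta> * m))"
    by (rule cb[OF S(1,2)])
  finally show ?thesis .
qed

end
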